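(* For every positive integer $n$ and every real $x$, \begin{align*} \sum_{k=1}^n\frac{((4x-27)k^2+(2x+27)k-2x-6)x^k}{(2k-1)\binom{3k}k}&=-2x+2(n+1)\frac{x^{n+1}}{\binom{3n}n},\\ \sum_{k=1}^n\frac{((4x-27)k^2+(27-2x)k-6)x^k}{k(2k-1)\binom{3k}k}&=-2x+\frac{2x^{n+1}}{\binom{3n}n},\\ \sum_{k=1}^n\frac{(2(x-16)k^2+(x+32)k-x-6)x^k}{(2k-1)\binom{4k}{2k}}&=-x+(n+1)\frac{x^{n+1}}{\binom{4n}{2n}},\\ \sum_{k=1}^n\frac{(2(x-16)k^2+(32-x)k-6)x^k}{k(2k-1)\binom{4k}{2k}}&=-x+\frac{x^{n+1}}{\binom{4n}{2n}},\\ \sum_{k=1}^n\frac{((4x-27)k^2+(6x+27)k+2x-6)x^k}{\binom{3k}k}&=-2x+\frac{2(n+1)(2n+1)x^{n+1}}{\binom{3n}n},\\ \sum_{k=1}^n\frac{(2(x-16)k^2+(3x+32)k+x-6)x^k}{\binom{4k}{2k}}&=-x+\frac{(n+1)(2n+1)x^{n+1}}{\binom{4n}{2n}}. \end{align*} *)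

theory Defs
  imports Complex_Main
begin

end

theory Submission
  imports Defs
begin

lemma alg: fixes A B F m :: real
  assumes h: "B*(m+1)*((2*m+2)*(2*m+1))*F = (3*m+3)*(3*m+2)*(3*m+1)*(A*F)" and F: "F \<noteq> 0" and m: "m \<ge> 0"
  shows "B = A*(3*(3*m+2)*(3*m+1)) / (2*(m+1)*(2*m+1))"
proof -
  have "(B*(2*(m+1)*(2*m+1)) - A*(3*(3*m+2)*(3*m+1))) * ((m+1)*F) = 0"
    using h by algebra
  then have e: "B*(2*(m+1)*(2*m+1)) = A*(3*(3*m+2)*(3*m+1))" using F m by simp
  have d: "2*(m+1)*(2*m+1) \<noteq> 0" using m by simp
  have "B = B*(2*(m+1)*(2*m+1)) / (2*(m+1)*(2*m+1))" using d by simp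
  also have "\<dots> = A*(3*(3*m+2)*(3*m+1)) / (2*(m+1)*(2*m+1))" by (simp only: e)
  finally show ?thesis .
qed
lemma alg4: fixes A B F m :: real
  assumes h: "B*((2*m+2)*(2*m+1))*((2*m+2)*(2*m+1))*F = (4*m+4)*(4*m+3)*(4*m+2)*(4*m+1)*(A*F)" and F: "F \<noteq> 0" and m: "m \<ge> 0"
  shows "B = A*(4*(4*m+3)*(4*m+1)) / ((2*m+2)*(2*m+1))"
proof -
  have "(B*((2*m+2)*(2*m+1)) - A*(4*(4*m+3)*(4*m+1))) * ((2*m+2)*(2*m+1)*F) = 0"
    using h by algebra
  then have e: "B*((2*m+2)*(2*m+1)) = A*(4*(4*m+3)*(4*m+1))" using F m by simp
  have d: "(2*m+2)*(2*m+1) \<noteq> 0" using m by simp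
  have "B = B*((2*m+2)*(2*m+1)) / ((2*m+2)*(2*m+1))" using d by simp
  also have "\<dots> = A*(4*(4*m+3)*(4*m+1)) / ((2*m+2)*(2*m+1))" by (simp only: e)
  finally show ?thesis .
qed
lemma bf: "k \<le> m \<Longrightarrow> real (m choose k) * fact k * fact (m - k) = fact m"
proof -
  assume "k \<le> m"
  then have "fact k * fact (m - k) * (m choose k) = fact m" by (rule binomial_fact_lemma)
  then have "real (fact k * fact (m - k) * (m choose k)) = real (fact m)" by simp
  then show ?thesis by (simp only: of_nat_mult of_nat_fact ac_simps)
qed
lemma r3: "real (3*(Suc n) choose (Suc n)) = real (3*n choose n) * (3*(3*real n+2)*(3*real n+1)) / (2*(real n+1)*(2*real n+1))"
proof (rule alg)
  define A where "A = real (3*n choose n)"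
  define B where "B = real (3*Suc n choose Suc n)"
  have e1: "3*n - n = 2*n" "3 * Suc n - Suc n = Suc (Suc (2*n))" "3*Suc n = Suc (Suc (Suc (3*n)))" by simp_all
  have a: "A * fact n * fact (2*n) = fact (3*n)" using bf[of n "3*n"] unfolding A_def e1 by simp
  have b: "B * fact (Suc n) * fact (Suc (Suc (2*n))) = fact (Suc (Suc (Suc (3*n))))"
    using bf[of "Suc n" "3*Suc n"] unfolding B_def e1 by simp
  have f1: "(fact (Suc n)::real) = (real n+1) * fact n" by (simp add: fact_Suc)
  have f2: "(fact (Suc (Suc (2*n)))::real) = (2*real n+2)*(2*real n+1) * fact (2*n)" by (simp add: fact_Suc algebra_simps)
  have f3: "(fact (Suc (Suc (Suc (3*n))))::real) = (3*real n+3)*(3*real n+2)*(3*real n+1) * fact (3*n)" by (simp add: fact_Suc algebra_simps)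
  show "B * (real n+1) * ((2*real n+2)*(2*real n+1)) * (fact n * fact (2*n)) = (3*real n+3)*(3*real n+2)*(3*real n+1) * (A * (fact n * fact (2*n)))"
      using b unfolding f1 f2 f3 a[symmetric] by (simp only: ac_simps)
qed auto
lemma r4: "real (4*(Suc n) choose (2*Suc n)) = real (4*n choose (2*n)) * (4*(4*real n+3)*(4*real n+1)) / ((2*real n+2)*(2*real n+1))"
proof (rule alg4)
  define A where "A = real (4*n choose (2*n))"
  define B where "B = real (4*Suc n choose (2*Suc n))"
  have e1: "4*n - 2*n = 2*n" "4 * Suc n - 2*Suc n = Suc (Suc (2*n))" "4*Suc n = Suc (Suc (Suc (Suc (4*n))))" "2*Suc n = Suc (Suc (2*n))" by simp_all
  have a: "A * fact (2*n) * fact (2*n) = fact (4*n)" using bf[of "2*n" "4*n"] unfolding A_def e1 by simp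
  have b: "B * fact (Suc (Suc (2*n))) * fact (Suc (Suc (2*n))) = fact (Suc (Suc (Suc (Suc (4*n)))))"
    using bf[of "2*Suc n" "4*Suc n"] unfolding B_def e1 by simp
  have f2: "(fact (Suc (Suc (2*n)))::real) = (2*real n+2)*(2*real n+1) * fact (2*n)" by (simp add: fact_Suc algebra_simps)
  have f3: "(fact (Suc (Suc (Suc (Suc (4*n)))))::real) = (4*real n+4)*(4*real n+3)*(4*real n+2)*(4*real n+1) * fact (4*n)" by (simp add: fact_Suc algebra_simps)
  show "B * ((2*real n+2)*(2*real n+1)) * ((2*real n+2)*(2*real n+1)) * (fact (2*n) * fact (2*n)) = (4*real n+4)*(4*real n+3)*(4*real n+2)*(4*real n+1) * (A * (fact (2*n) * fact (2*n)))"
      using b unfolding f2 f3 a[symmetric] by (simp only: ac_simps)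
qed auto
lemma core1: fixes a p q K r x y :: real
  assumes a: "a > 0" and p: "p > 0" and K: "K \<ge> 1" and rd: "r = 2*K - 1" and pd: "p = 3*(3*K-1)*(3*K-2)" and qd: "q = 2*K*(2*K-1)"
  shows "-2*x + 2*K * y / a + ((4*x-27)*K^2 + (2*x+27)*K - 2*x - 6) * y / (r * (a*p/q)) = -2*x + 2*(K+1) * (x*y) / (a*p/q)"
proof -
  have r: "r > 0" "q > 0" "K > 0" using K qd rd by auto
  have "2*K * y / a + ((4*x-27)*K^2 + (2*x+27)*K - 2*x - 6) * y / (r * (a*p/q)) - 2*(K+1) * (x*y) / (a*p/q) =
       (2*K * y * p * r * K + ((4*x-27)*K^2 + (2*x+27)*K - 2*x - 6) * y * q * K / (r * 1) * r
         - 2*(K+1) * (x*y) * q * r * K) / (a*p*r*K)"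
    using a p r by (simp add: field_simps)
  also have "\<dots> = 0" using r unfolding pd qd rd by (simp add: field_simps) (simp add: algebra_simps power2_eq_square)
  finally show ?thesis by simp
qed

lemma core2: fixes a p q K r x y :: real
  assumes a: "a > 0" and p: "p > 0" and K: "K \<ge> 1" and rd: "r = 2*K - 1" and pd: "p = 3*(3*K-1)*(3*K-2)" and qd: "q = 2*K*(2*K-1)"
  shows "-2*x + 2 * y / a + ((4*x-27)*K^2 + (27-2*x)*K - 6) * y / (K * r * (a*p/q)) = -2*x + 2 * (x*y) / (a*p/q)"
proof -
  have r: "r > 0" "q > 0" "K > 0" using K qd rd by auto
  have "2 * y / a + ((4*x-27)*K^2 + (27-2*x)*K - 6) * y / (K * r * (a*p/q)) - 2 * (x*y) / (a*p/q) =
       (2 * y * p * r * K + ((4*x-27)*K^2 + (27-2*x)*K - 6) * y * q * K / (K * r * 1) * r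
         - 2 * (x*y) * q * r * K) / (a*p*r*K)"
    using a p r by (simp add: field_simps)
  also have "\<dots> = 0" using r unfolding pd qd rd by (simp add: field_simps) (simp add: algebra_simps power2_eq_square)
  finally show ?thesis by simp
qed

lemma core3: fixes a p q K r x y :: real
  assumes a: "a > 0" and p: "p > 0" and K: "K \<ge> 1" and rd: "r = 2*K - 1" and pd: "p = 4*(4*K-1)*(4*K-3)" and qd: "q = (2*K)*(2*K-1)"
  shows "-x + K * y / a + (2*(x-16)*K^2 + (x+32)*K - x - 6) * y / (r * (a*p/q)) = -x + (K+1) * (x*y) / (a*p/q)"
proof -
  have r: "r > 0" "q > 0" "K > 0" using K qd rd by auto
  have "K * y / a + (2*(x-16)*K^2 + (x+32)*K - x - 6) * y / (r * (a*p/q)) - (K+1) * (x*y) / (a*p/q) =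
       (K * y * p * r * K + (2*(x-16)*K^2 + (x+32)*K - x - 6) * y * q * K / (r * 1) * r
         - (K+1) * (x*y) * q * r * K) / (a*p*r*K)"
    using a p r by (simp add: field_simps)
  also have "\<dots> = 0" using r unfolding pd qd rd by (simp add: field_simps) (simp add: algebra_simps power2_eq_square)
  finally show ?thesis by simp
qed

lemma core4: fixes a p q K r x y :: real
  assumes a: "a > 0" and p: "p > 0" and K: "K \<ge> 1" and rd: "r = 2*K - 1" and pd: "p = 4*(4*K-1)*(4*K-3)" and qd: "q = (2*K)*(2*K-1)"
  shows "-x + y / a + (2*(x-16)*K^2 + (32-x)*K - 6) * y / (K * r * (a*p/q)) = -x + (x*y) / (a*p/q)"
proof -
  have r: "r > 0" "q > 0" "K > 0" using K qd rd by auto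
  have "y / a + (2*(x-16)*K^2 + (32-x)*K - 6) * y / (K * r * (a*p/q)) - (x*y) / (a*p/q) =
       (y * p * r * K + (2*(x-16)*K^2 + (32-x)*K - 6) * y * q * K / (K * r * 1) * r
         - (x*y) * q * r * K) / (a*p*r*K)"
    using a p r by (simp add: field_simps)
  also have "\<dots> = 0" using r unfolding pd qd rd by (simp add: field_simps) (simp add: algebra_simps power2_eq_square)
  finally show ?thesis by simp
qed

lemma core5: fixes a p q K r x y :: real
  assumes a: "a > 0" and p: "p > 0" and K: "K \<ge> 1" and rd: "r = 2*K - 1" and pd: "p = 3*(3*K-1)*(3*K-2)" and qd: "q = 2*K*(2*K-1)"
  shows "-2*x + 2*K*(2*K-1) * y / a + ((4*x-27)*K^2 + (6*x+27)*K + 2*x - 6) * y / ((a*p/q)) = -2*x + 2*(K+1)*(2*K+1) * (x*y) / (a*p/q)"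
proof -
  have r: "r > 0" "q > 0" "K > 0" using K qd rd by auto
  have "2*K*(2*K-1) * y / a + ((4*x-27)*K^2 + (6*x+27)*K + 2*x - 6) * y / ((a*p/q)) - 2*(K+1)*(2*K+1) * (x*y) / (a*p/q) =
       (2*K*(2*K-1) * y * p * r * K + ((4*x-27)*K^2 + (6*x+27)*K + 2*x - 6) * y * q * K / (1) * r
         - 2*(K+1)*(2*K+1) * (x*y) * q * r * K) / (a*p*r*K)"
    using a p r by (simp add: field_simps)
  also have "\<dots> = 0" using r unfolding pd qd rd by (simp add: field_simps) (simp add: algebra_simps power2_eq_square)
  finally show ?thesis by simp
qed

lemma core6: fixes a p q K r x y :: real
  assumes a: "a > 0" and p: "p > 0" and K: "K \<ge> 1" and rd: "r = 2*K - 1" and pd: "p = 4*(4*K-1)*(4*K-3)" and qd: "q = (2*K)*(2*K-1)"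
  shows "-x + K*(2*K-1) * y / a + (2*(x-16)*K^2 + (3*x+32)*K + x - 6) * y / ((a*p/q)) = -x + (K+1)*(2*K+1) * (x*y) / (a*p/q)"
proof -
  have r: "r > 0" "q > 0" "K > 0" using K qd rd by auto
  have "K*(2*K-1) * y / a + (2*(x-16)*K^2 + (3*x+32)*K + x - 6) * y / ((a*p/q)) - (K+1)*(2*K+1) * (x*y) / (a*p/q) =
       (K*(2*K-1) * y * p * r * K + (2*(x-16)*K^2 + (3*x+32)*K + x - 6) * y * q * K / (1) * r
         - (K+1)*(2*K+1) * (x*y) * q * r * K) / (a*p*r*K)"
    using a p r by (simp add: field_simps)
  also have "\<dots> = 0" using r unfolding pd qd rd by (simp add: field_simps) (simp add: algebra_simps power2_eq_square)
  finally show ?thesis by simp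
qed

lemma p1: "(\<Sum>k=1..n. ((4*x-27)*real k^2 + (2*x+27)*real k - 2*x - 6) * x^k
            / ((2*real k - 1) * real (3*k choose k)))
           = -2*x + 2*(real n + 1) * x^(n+1) / real (3*n choose n)"
proof (induction n)
  case 0 then show ?case by simp
next
  case (Suc n)
  have A: "real (3*n choose n) > 0" by simp
  have Bq: "real (3*Suc n choose Suc n) = real (3*n choose n) * (3*(3*real (Suc n)-1)*(3*real (Suc n)-2)) / (2*real (Suc n)*(2*real (Suc n)-1))"
    unfolding r3 by (simp add: algebra_simps)
  have e: "real n + 1 = real (Suc n)" "x^(n+1) = x^Suc n" "x^(Suc n+1) = x * x^Suc n" "2*real n + 1 = 2*real (Suc n) - 1" by simp_all
  have p0: "3*(3*real (Suc n)-1)*(3*real (Suc n)-2) > 0" by simp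
  have s: "sum f {1..Suc n} = sum f {1..n} + f (Suc n)" for f :: "nat \<Rightarrow> real" by simp
  show ?case unfolding s Suc.IH unfolding e Bq
    by (rule core1[OF A p0 _ refl refl refl]) simp
qed

lemma p2: "(\<Sum>k=1..n. ((4*x-27)*real k^2 + (27-2*x)*real k - 6) * x^k
            / (real k * (2*real k - 1) * real (3*k choose k)))
           = -2*x + 2 * x^(n+1) / real (3*n choose n)"
proof (induction n)
  case 0 then show ?case by simp
next
  case (Suc n)
  have A: "real (3*n choose n) > 0" by simp
  have Bq: "real (3*Suc n choose Suc n) = real (3*n choose n) * (3*(3*real (Suc n)-1)*(3*real (Suc n)-2)) / (2*real (Suc n)*(2*real (Suc n)-1))"
    unfolding r3 by (simp add: algebra_simps)
  have e: "real n + 1 = real (Suc n)" "x^(n+1) = x^Suc n" "x^(Suc n+1) = x * x^Suc n" "2*real n + 1 = 2*real (Suc n) - 1" by simp_all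
  have p0: "3*(3*real (Suc n)-1)*(3*real (Suc n)-2) > 0" by simp
  have s: "sum f {1..Suc n} = sum f {1..n} + f (Suc n)" for f :: "nat \<Rightarrow> real" by simp
  show ?case unfolding s Suc.IH unfolding e Bq
    by (rule core2[OF A p0 _ refl refl refl]) simp
qed

lemma p3: "(\<Sum>k=1..n. (2*(x-16)*real k^2 + (x+32)*real k - x - 6) * x^k
            / ((2*real k - 1) * real (4*k choose (2*k))))
           = -x + (real n + 1) * x^(n+1) / real (4*n choose (2*n))"
proof (induction n)
  case 0 then show ?case by simp
next
  case (Suc n)
  have A: "real (4*n choose (2*n)) > 0" by simp
  have Bq: "real (4*Suc n choose (2*Suc n)) = real (4*n choose (2*n)) * (4*(4*real (Suc n)-1)*(4*real (Suc n)-3)) / ((2*real (Suc n))*(2*real (Suc n)-1))"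
    unfolding r4 by (simp add: algebra_simps)
  have e: "real n + 1 = real (Suc n)" "x^(n+1) = x^Suc n" "x^(Suc n+1) = x * x^Suc n" "2*real n + 1 = 2*real (Suc n) - 1" by simp_all
  have p0: "4*(4*real (Suc n)-1)*(4*real (Suc n)-3) > 0" by simp
  have s: "sum f {1..Suc n} = sum f {1..n} + f (Suc n)" for f :: "nat \<Rightarrow> real" by simp
  show ?case unfolding s Suc.IH unfolding e Bq
    by (rule core3[OF A p0 _ refl refl refl]) simp
qed

lemma p4: "(\<Sum>k=1..n. (2*(x-16)*real k^2 + (32-x)*real k - 6) * x^k
            / (real k * (2*real k - 1) * real (4*k choose (2*k))))
           = -x + x^(n+1) / real (4*n choose (2*n))"
proof (induction n)
  case 0 then show ?case by simp
next
  case (Suc n)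
  have A: "real (4*n choose (2*n)) > 0" by simp
  have Bq: "real (4*Suc n choose (2*Suc n)) = real (4*n choose (2*n)) * (4*(4*real (Suc n)-1)*(4*real (Suc n)-3)) / ((2*real (Suc n))*(2*real (Suc n)-1))"
    unfolding r4 by (simp add: algebra_simps)
  have e: "real n + 1 = real (Suc n)" "x^(n+1) = x^Suc n" "x^(Suc n+1) = x * x^Suc n" "2*real n + 1 = 2*real (Suc n) - 1" by simp_all
  have p0: "4*(4*real (Suc n)-1)*(4*real (Suc n)-3) > 0" by simp
  have s: "sum f {1..Suc n} = sum f {1..n} + f (Suc n)" for f :: "nat \<Rightarrow> real" by simp
  show ?case unfolding s Suc.IH unfolding e Bq
    by (rule core4[OF A p0 _ refl refl refl]) simp
qed

lemma p5: "(\<Sum>k=1..n. ((4*x-27)*real k^2 + (6*x+27)*real k + 2*x - 6) * x^k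
            / real (3*k choose k))
           = -2*x + 2*(real n + 1)*(2*real n + 1) * x^(n+1) / real (3*n choose n)"
proof (induction n)
  case 0 then show ?case by simp
next
  case (Suc n)
  have A: "real (3*n choose n) > 0" by simp
  have Bq: "real (3*Suc n choose Suc n) = real (3*n choose n) * (3*(3*real (Suc n)-1)*(3*real (Suc n)-2)) / (2*real (Suc n)*(2*real (Suc n)-1))"
    unfolding r3 by (simp add: algebra_simps)
  have e: "real n + 1 = real (Suc n)" "x^(n+1) = x^Suc n" "x^(Suc n+1) = x * x^Suc n" "2*real n + 1 = 2*real (Suc n) - 1" by simp_all
  have p0: "3*(3*real (Suc n)-1)*(3*real (Suc n)-2) > 0" by simp
  have s: "sum f {1..Suc n} = sum f {1..n} + f (Suc n)" for f :: "nat \<Rightarrow> real" by simp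
  show ?case unfolding s Suc.IH unfolding e Bq
    by (rule core5[OF A p0 _ refl refl refl]) simp
qed

lemma p6: "(\<Sum>k=1..n. (2*(x-16)*real k^2 + (3*x+32)*real k + x - 6) * x^k
            / real (4*k choose (2*k)))
           = -x + (real n + 1)*(2*real n + 1) * x^(n+1) / real (4*n choose (2*n))"
proof (induction n)
  case 0 then show ?case by simp
next
  case (Suc n)
  have A: "real (4*n choose (2*n)) > 0" by simp
  have Bq: "real (4*Suc n choose (2*Suc n)) = real (4*n choose (2*n)) * (4*(4*real (Suc n)-1)*(4*real (Suc n)-3)) / ((2*real (Suc n))*(2*real (Suc n)-1))"
    unfolding r4 by (simp add: algebra_simps)
  have e: "real n + 1 = real (Suc n)" "x^(n+1) = x^Suc n" "x^(Suc n+1) = x * x^Suc n" "2*real n + 1 = 2*real (Suc n) - 1" by simp_all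
  have p0: "4*(4*real (Suc n)-1)*(4*real (Suc n)-3) > 0" by simp
  have s: "sum f {1..Suc n} = sum f {1..n} + f (Suc n)" for f :: "nat \<Rightarrow> real" by simp
  show ?case unfolding s Suc.IH unfolding e Bq
    by (rule core6[OF A p0 _ refl refl refl]) simp
qed

theorem lemma6p1:
  fixes n :: nat and x :: real
  assumes "n \<ge> 1"
  shows "((\<Sum>k=1..n. ((4*x-27)*real k^2 + (2*x+27)*real k - 2*x - 6) * x^k
            / ((2*real k - 1) * real (3*k choose k)))
           = -2*x + 2*(real n + 1) * x^(n+1) / real (3*n choose n))
    \<and> ((\<Sum>k=1..n. ((4*x-27)*real k^2 + (27-2*x)*real k - 6) * x^k
            / (real k * (2*real k - 1) * real (3*k choose k)))
           = -2*x + 2 * x^(n+1) / real (3*n choose n))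
    \<and> ((\<Sum>k=1..n. (2*(x-16)*real k^2 + (x+32)*real k - x - 6) * x^k
            / ((2*real k - 1) * real (4*k choose (2*k))))
           = -x + (real n + 1) * x^(n+1) / real (4*n choose (2*n)))
    \<and> ((\<Sum>k=1..n. (2*(x-16)*real k^2 + (32-x)*real k - 6) * x^k
            / (real k * (2*real k - 1) * real (4*k choose (2*k))))
           = -x + x^(n+1) / real (4*n choose (2*n)))
    \<and> ((\<Sum>k=1..n. ((4*x-27)*real k^2 + (6*x+27)*real k + 2*x - 6) * x^k
            / real (3*k choose k))
           = -2*x + 2*(real n + 1)*(2*real n + 1) * x^(n+1) / real (3*n choose n))
    \<and> ((\<Sum>k=1..n. (2*(x-16)*real k^2 + (3*x+32)*real k + x - 6) * x^k
            / real (4*k choose (2*k)))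
           = -x + (real n + 1)*(2*real n + 1) * x^(n+1) / real (4*n choose (2*n)))"
  using p1 p2 p3 p4 p5 p6 by blast

end
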